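(* Let $G=\prod_{1\leq i\leq k}C_{p^{r_i}}$ be a finite non-cyclic abelian $p$-group with $r_1\geq r_2\geq\dots\geq r_k$ and $k\geq 2$, and let $x_1$ be a generator of the factor $C_{p^{r_1}}$. Then the set of dominant vertices of $\Delta_D(G)$ is $\langle x_1^{p^{r_2}}\rangle$.
   Context: $C_n$ denotes the cyclic group of order $n$. The deep commuting graph $\Delta_D(G)$ has vertex set $G$, distinct vertices adjacent iff their preimages commute in a Schur cover $\tilde G$ of $G$ (a central extension $\{e\}\to M(G)\to\tilde G\to G\to\{e\}$ with kernel contained in $Z(\tilde G)\cap[\tilde G,\tilde G]$, of maximal order; $M(G)$ the Schur multiplier). A vertex is dominant if it is adjacent to every other vertex. *)

theory Defs
  imports "HOL-Algebra.Algebra"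
begin

definition grp_center :: "('a, 'b) monoid_scheme \<Rightarrow> 'a set" where
  "grp_center H = {z \<in> carrier H. \<forall>y \<in> carrier H. z \<otimes>\<^bsub>H\<^esub> y = y \<otimes>\<^bsub>H\<^esub> z}"

definition stem_extension ::
  "('c, 'd) monoid_scheme \<Rightarrow> ('c \<Rightarrow> 'a) \<Rightarrow> ('a, 'b) monoid_scheme \<Rightarrow> bool" where
  "stem_extension H \<pi> G \<longleftrightarrow> group H \<and> group G \<and> \<pi> \<in> hom H G \<and> \<pi> ` carrier H = carrier G
     \<and> kernel H G \<pi> \<subseteq> grp_center H \<inter> derived H (carrier H)"

text \<open>A Schur cover: a stem extension with finite kernel of maximal order among all
  stem extensions of G (every group is isomorphic to one with carrier in a type of
  sufficient size; for finite G all stem extensions are finite, so groups on nat suffice).\<close>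
definition schur_cover ::
  "('c, 'd) monoid_scheme \<Rightarrow> ('c \<Rightarrow> 'a) \<Rightarrow> ('a, 'b) monoid_scheme \<Rightarrow> bool" where
  "schur_cover H \<pi> G \<longleftrightarrow> stem_extension H \<pi> G \<and> finite (kernel H G \<pi>) \<and>
     (\<forall>(H' :: nat monoid) (\<pi>' :: nat \<Rightarrow> 'a). stem_extension H' \<pi>' G \<longrightarrow>
        card (kernel H' G \<pi>') \<le> card (kernel H G \<pi>))"

text \<open>Adjacency in the deep commuting graph (computed via a Schur cover H, \<pi>):
  distinct g, h are adjacent iff their preimages commute.\<close>
definition deep_adj ::
  "('c, 'd) monoid_scheme \<Rightarrow> ('c \<Rightarrow> 'a) \<Rightarrow> 'a \<Rightarrow> 'a \<Rightarrow> bool" where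
  "deep_adj H \<pi> g h \<longleftrightarrow> g \<noteq> h \<and>
     (\<forall>a \<in> carrier H. \<forall>b \<in> carrier H. \<pi> a = g \<longrightarrow> \<pi> b = h \<longrightarrow> a \<otimes>\<^bsub>H\<^esub> b = b \<otimes>\<^bsub>H\<^esub> a)"

definition dominant_vertices ::
  "('c, 'd) monoid_scheme \<Rightarrow> ('c \<Rightarrow> 'a) \<Rightarrow> ('a, 'b) monoid_scheme \<Rightarrow> 'a set" where
  "dominant_vertices H \<pi> G =
     {g \<in> carrier G. \<forall>h \<in> carrier G. h \<noteq> g \<longrightarrow> deep_adj H \<pi> g h}"

text \<open>The direct product C_{p^(r 0)} x ... x C_{p^(r (k-1))}, written additively
  (as a multiplicative monoid record): tuples indexed by i < k, zero outside.\<close>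
definition cyc_prod :: "nat \<Rightarrow> (nat \<Rightarrow> nat) \<Rightarrow> nat \<Rightarrow> (nat \<Rightarrow> nat) monoid" where
  "cyc_prod p r k =
    \<lparr> carrier = {f. (\<forall>i<k. f i < p ^ r i) \<and> (\<forall>i\<ge>k. f i = 0)},
      monoid.mult = (\<lambda>f g i. if i < k then (f i + g i) mod (p ^ r i) else 0),
      monoid.one = (\<lambda>i. 0) \<rparr>"

end

theory Submission
  imports Defs "HOL-Algebra.Multiplicative_Group"
begin


lemma cp_carrier: "f \<in> carrier (cyc_prod p r k) \<longleftrightarrow> (\<forall>i<k. f i < p^r i) \<and> (\<forall>i\<ge>k. f i = 0)"
  by (simp add: cyc_prod_def)

lemma cp_mult: "f \<otimes>\<^bsub>cyc_prod p r k\<^esub> g = (\<lambda>i. if i<k then (f i + g i) mod p^r i else 0)"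
  by (simp add: cyc_prod_def)

lemma cp_one: "\<one>\<^bsub>cyc_prod p r k\<^esub> = (\<lambda>i. 0)"
  by (simp add: cyc_prod_def)

lemma cp_comm: "f \<otimes>\<^bsub>cyc_prod p r k\<^esub> g = g \<otimes>\<^bsub>cyc_prod p r k\<^esub> f"
  by (auto simp: cp_mult add.commute)

lemma cp_pow: "f \<in> carrier (cyc_prod p r k) \<Longrightarrow>
   f [^]\<^bsub>cyc_prod p r k\<^esub> (n::nat) = (\<lambda>i. if i<k then (n * f i) mod p^r i else 0)"
proof (induction n)
  case 0 then show ?case by (auto simp: cp_one)
next
  case (Suc n)
  show ?case using Suc by (intro ext) (simp add: cp_mult mod_add_left_eq mod_add_right_eq add.commute)
qed

lemma pw_gt1: "Factorial_Ring.prime (p::nat) \<Longrightarrow> (m::nat) \<ge> 1 \<Longrightarrow> 1 < p ^ m"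
  using prime_gt_1_nat[of p] by (intro one_less_power) auto

definition ev :: "nat \<Rightarrow> nat \<Rightarrow> nat" where "ev j = (\<lambda>i. if i = j then 1 else 0)"

lemma ev_carrier: "Factorial_Ring.prime p \<Longrightarrow> r j \<ge> 1 \<Longrightarrow> j < k \<Longrightarrow> ev j \<in> carrier (cyc_prod p r k)"
  unfolding cp_carrier ev_def
  using pw_gt1[of p "r j"] prime_gt_1_nat[of p] by auto

lemma ev_pow: "Factorial_Ring.prime p \<Longrightarrow> r j \<ge> 1 \<Longrightarrow> j < k \<Longrightarrow>
   ev j [^]\<^bsub>cyc_prod p r k\<^esub> (n::nat) = (\<lambda>i. if i = j then n mod p^r j else 0)"
  by (subst cp_pow[OF ev_carrier]) (auto simp: ev_def)

lemma (in group) cm_swap: "a \<in> carrier G \<Longrightarrow> b \<in> carrier G \<Longrightarrow>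
   a \<otimes> b = (a \<otimes> b \<otimes> inv a \<otimes> inv b) \<otimes> (b \<otimes> a)"
proof -
  assume a: "a \<in> carrier G" and b: "b \<in> carrier G"
  have "inv b \<otimes> (b \<otimes> a) = a" using a b by (simp add: m_assoc[symmetric])
  then show ?thesis using a b by (simp add: m_assoc)
qed

lemma (in group) cm_unique: "a \<in> carrier G \<Longrightarrow> b \<in> carrier G \<Longrightarrow> z \<in> carrier G \<Longrightarrow>
   a \<otimes> b = z \<otimes> (b \<otimes> a) \<Longrightarrow> a \<otimes> b \<otimes> inv a \<otimes> inv b = z"
  by (simp add: m_assoc)



definition Is :: "nat \<Rightarrow> (nat \<times> nat) set" where "Is k = {x. fst x < snd x \<and> snd x < k}"

definition KK :: "nat \<Rightarrow> (nat \<Rightarrow> nat) \<Rightarrow> nat \<Rightarrow> (nat \<times> nat \<Rightarrow> nat) set" where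
  "KK p r k = PiE (Is k) (\<lambda>x. {..<p ^ r (snd x)})"

lemma finite_Is: "finite (Is k)"
  by (rule finite_subset[of _ "{..<k} \<times> {..<k}"]) (auto simp: Is_def)

lemma finite_KK: "finite (KK p r k)"
  unfolding KK_def by (intro finite_PiE finite_Is) auto

definition ext_grp :: "nat \<Rightarrow> (nat \<Rightarrow> nat) \<Rightarrow> nat \<Rightarrow> ((nat \<Rightarrow> nat) \<times> (nat \<times> nat \<Rightarrow> nat)) monoid" where
  "ext_grp p r k = \<lparr> carrier = carrier (cyc_prod p r k) \<times> KK p r k,
     monoid.mult = (\<lambda>a b. (fst a \<otimes>\<^bsub>cyc_prod p r k\<^esub> fst b,
        \<lambda>x\<in>Is k. (snd a x + snd b x + fst a (fst x) * fst b (snd x)) mod p ^ r (snd x))),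
     monoid.one = (\<lambda>i. 0, \<lambda>x\<in>Is k. 0) \<rparr>"

lemma neg_mod_aux: "0 < (m::nat) \<Longrightarrow> ((m - (c + a) mod m) mod m + c + a) mod m = 0"
proof -
  assume m: "0 < m"
  have "((m - (c + a) mod m) mod m + c + a) mod m = ((m - (c + a) mod m) + (c + a) mod m) mod m"
    by (metis add.assoc mod_add_eq mod_mod_trivial)
  also have "\<dots> = 0" using m by simp
  finally show ?thesis .
qed

lemma mod3_aux: "(Y::nat) mod m = Z mod m \<Longrightarrow> (A mod m + B + Y) mod m = (A + B + Z) mod m"
proof -
  assume e: "Y mod m = Z mod m"
  have "(A mod m + B + Y) mod m = ((A mod m + B) mod m + Y mod m) mod m" by (simp add: mod_add_eq)
  also have "\<dots> = ((A + B) mod m + Z mod m) mod m" using e by (simp add: mod_add_left_eq)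
  also have "\<dots> = (A + B + Z) mod m" by (simp add: mod_add_eq)
  finally show ?thesis .
qed

lemma mod3_aux2: "(A + B + C * D) mod m = (A + B mod m + C * (D mod m)) mod (m::nat)"
proof -
  have "(A + B mod m + C * (D mod m)) mod m = ((A + B mod m) mod m + (C * (D mod m)) mod m) mod m"
    by (simp add: mod_add_eq)
  also have "\<dots> = ((A + B) mod m + (C * D) mod m) mod m"
    by (simp add: mod_add_right_eq mod_mult_right_eq)
  also have "\<dots> = (A + B + C * D) mod m" by (simp add: mod_add_eq)
  finally show ?thesis by simp
qed

lemma neg_mod2: "g < (m::nat) \<Longrightarrow> ((m - g) mod m + g) mod m = 0"
  by (simp add: mod_add_left_eq)

locale cpset =
  fixes p :: nat and r :: "nat \<Rightarrow> nat" and k :: nat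
  assumes pprime: "Factorial_Ring.prime p"
    and rpos: "\<forall>i<k. r i \<ge> 1"
    and rmono: "\<forall>i j. i \<le> j \<and> j < k \<longrightarrow> r j \<le> r i"
begin

abbreviation "G \<equiv> cyc_prod p r k"

lemma M_pos: "0 < p ^ m"
  using prime_gt_0_nat[OF pprime] by simp

lemma dvd_pw: "i \<le> j \<Longrightarrow> j < k \<Longrightarrow> p ^ r j dvd p ^ r i"
  using rmono by (simp add: le_imp_power_dvd)

lemma key_mod: "x \<in> Is k \<Longrightarrow>
   ((s mod p ^ r (fst x)) * c) mod p ^ r (snd x) = (s * c) mod p ^ r (snd x)"
  unfolding Is_def
  by (metis (mono_tags, lifting) dvd_pw less_imp_le mem_Collect_eq mod_mod_cancel mod_mult_left_eq order.strict_trans)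

lemma restr_KK: "(\<lambda>x\<in>Is k. f x mod p ^ r (snd x)) \<in> KK p r k"
  using M_pos by (auto simp: KK_def)

lemma ext_carrier: "a \<in> carrier (ext_grp p r k) \<longleftrightarrow> fst a \<in> carrier G \<and> snd a \<in> KK p r k"
  by (cases a) (simp add: ext_grp_def)

lemma ext_mult: "a \<otimes>\<^bsub>ext_grp p r k\<^esub> b = (fst a \<otimes>\<^bsub>G\<^esub> fst b,
        \<lambda>x\<in>Is k. (snd a x + snd b x + fst a (fst x) * fst b (snd x)) mod p ^ r (snd x))"
  by (simp add: ext_grp_def)

lemma ext_one: "\<one>\<^bsub>ext_grp p r k\<^esub> = (\<lambda>i. 0, \<lambda>x\<in>Is k. 0)"
  by (simp add: ext_grp_def)

lemma cp_closed: "f \<in> carrier G \<Longrightarrow> g \<in> carrier G \<Longrightarrow> f \<otimes>\<^bsub>G\<^esub> g \<in> carrier G"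
  using M_pos by (simp add: cp_carrier cp_mult)

lemma KK_ext: "c \<in> KK p r k \<Longrightarrow> restrict c (Is k) = c"
  by (simp add: KK_def PiE_def extensional_restrict)

lemma ext_group: "group (ext_grp p r k)"
proof (rule groupI)
  fix a b assume "a \<in> carrier (ext_grp p r k)" "b \<in> carrier (ext_grp p r k)"
  then show "a \<otimes>\<^bsub>ext_grp p r k\<^esub> b \<in> carrier (ext_grp p r k)"
    unfolding ext_carrier ext_mult using cp_closed restr_KK by simp
next
  show "\<one>\<^bsub>ext_grp p r k\<^esub> \<in> carrier (ext_grp p r k)"
    unfolding ext_carrier ext_one using M_pos by (simp add: cp_carrier KK_def)
next
  fix a b c assume a: "a \<in> carrier (ext_grp p r k)" and b: "b \<in> carrier (ext_grp p r k)"
    and c: "c \<in> carrier (ext_grp p r k)"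
  have 1: "fst a \<otimes>\<^bsub>G\<^esub> fst b \<otimes>\<^bsub>G\<^esub> fst c = fst a \<otimes>\<^bsub>G\<^esub> (fst b \<otimes>\<^bsub>G\<^esub> fst c)"
    by (intro ext) (simp add: cp_mult mod_add_left_eq mod_add_right_eq add.assoc)
  have 2: "((snd a x + snd b x + fst a (fst x) * fst b (snd x)) mod p ^ r (snd x) + snd c x +
            (fst a \<otimes>\<^bsub>G\<^esub> fst b) (fst x) * fst c (snd x)) mod p ^ r (snd x) =
        (snd a x + (snd b x + snd c x + fst b (fst x) * fst c (snd x)) mod p ^ r (snd x) +
            fst a (fst x) * (fst b \<otimes>\<^bsub>G\<^esub> fst c) (snd x)) mod p ^ r (snd x)" if x: "x \<in> Is k" for x
  proof -
    have sx: "snd x < k" using x by (simp add: Is_def)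
    have fx: "fst x < k" using x by (simp add: Is_def)
    have "((snd a x + snd b x + fst a (fst x) * fst b (snd x)) mod p ^ r (snd x) + snd c x +
            (fst a \<otimes>\<^bsub>G\<^esub> fst b) (fst x) * fst c (snd x)) mod p ^ r (snd x)
        = (snd a x + snd b x + fst a (fst x) * fst b (snd x) + snd c x +
            (fst a (fst x) + fst b (fst x)) * fst c (snd x)) mod p ^ r (snd x)"
    proof -
      have e1: "(fst a \<otimes>\<^bsub>G\<^esub> fst b) (fst x) = (fst a (fst x) + fst b (fst x)) mod p ^ r (fst x)"
        using fx by (simp add: cp_mult)
      have e2: "((fst a (fst x) + fst b (fst x)) mod p ^ r (fst x) * fst c (snd x)) mod p ^ r (snd x)
          = ((fst a (fst x) + fst b (fst x)) * fst c (snd x)) mod p ^ r (snd x)"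
        using key_mod[OF x] by simp
      show ?thesis unfolding e1 by (rule mod3_aux[OF e2])
    qed
    also have "\<dots> = (snd a x + (snd b x + snd c x + fst b (fst x) * fst c (snd x)) +
            fst a (fst x) * (fst b (snd x) + fst c (snd x))) mod p ^ r (snd x)"
      by (simp add: algebra_simps)
    also have "\<dots> = (snd a x + (snd b x + snd c x + fst b (fst x) * fst c (snd x)) mod p ^ r (snd x) +
            fst a (fst x) * (fst b \<otimes>\<^bsub>G\<^esub> fst c) (snd x)) mod p ^ r (snd x)"
    proof -
      have e: "(fst b \<otimes>\<^bsub>G\<^esub> fst c) (snd x) = (fst b (snd x) + fst c (snd x)) mod p ^ r (snd x)"
        using sx by (simp add: cp_mult)
      show ?thesis unfolding e by (rule mod3_aux2)
    qed
    finally show ?thesis .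
  qed
  have 3: "(\<lambda>x\<in>Is k. ((\<lambda>x\<in>Is k. (snd a x + snd b x + fst a (fst x) * fst b (snd x)) mod p ^ r (snd x)) x
              + snd c x + (fst a \<otimes>\<^bsub>G\<^esub> fst b) (fst x) * fst c (snd x)) mod p ^ r (snd x))
         = (\<lambda>x\<in>Is k. (snd a x + (\<lambda>x\<in>Is k. (snd b x + snd c x + fst b (fst x) * fst c (snd x)) mod p ^ r (snd x)) x
              + fst a (fst x) * (fst b \<otimes>\<^bsub>G\<^esub> fst c) (snd x)) mod p ^ r (snd x))"
    by (rule restrict_ext) (simp only: restrict_apply' 2)
  show "a \<otimes>\<^bsub>ext_grp p r k\<^esub> b \<otimes>\<^bsub>ext_grp p r k\<^esub> c = a \<otimes>\<^bsub>ext_grp p r k\<^esub> (b \<otimes>\<^bsub>ext_grp p r k\<^esub> c)"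
    unfolding ext_mult fst_conv snd_conv using 1 3 by simp
next
  fix a assume a: "a \<in> carrier (ext_grp p r k)"
  have f: "(\<lambda>i. 0) \<otimes>\<^bsub>G\<^esub> fst a = fst a" using a unfolding ext_carrier
    by (intro ext) (simp add: cp_mult cp_carrier)
  have s: "(\<lambda>x\<in>Is k. ((\<lambda>x\<in>Is k. 0::nat) x + snd a x + 0 * fst a (snd x)) mod p ^ r (snd x)) = snd a"
  proof -
    have "(\<lambda>x\<in>Is k. ((\<lambda>x\<in>Is k. 0::nat) x + snd a x + 0 * fst a (snd x)) mod p ^ r (snd x)) = restrict (snd a) (Is k)"
    proof (rule restrict_ext)
      fix x assume x: "x \<in> Is k"
      have "snd a x < p ^ r (snd x)" using a x unfolding ext_carrier by (auto simp: KK_def)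
      then show "((\<lambda>x\<in>Is k. 0::nat) x + snd a x + 0 * fst a (snd x)) mod p ^ r (snd x) = snd a x"
        using x by simp
    qed
    then show ?thesis using KK_ext a unfolding ext_carrier by simp
  qed
  show "\<one>\<^bsub>ext_grp p r k\<^esub> \<otimes>\<^bsub>ext_grp p r k\<^esub> a = a"
    unfolding ext_one ext_mult fst_conv snd_conv f s by simp
next
  fix a assume a: "a \<in> carrier (ext_grp p r k)"
  obtain g c where ac: "a = (g, c)" by (cases a)
  have g: "g \<in> carrier G" and c: "c \<in> KK p r k" using a ac unfolding ext_carrier by auto
  define g' where "g' = (\<lambda>i. if i < k then (p ^ r i - g i) mod p ^ r i else 0)"
  define c' where "c' = (\<lambda>x\<in>Is k. (p ^ r (snd x) - (c x + g' (fst x) * g (snd x)) mod p ^ r (snd x)) mod p ^ r (snd x))"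
  have g'c: "g' \<in> carrier G" using M_pos by (simp add: cp_carrier g'_def)
  have c'c: "c' \<in> KK p r k" unfolding c'_def by (rule restr_KK)
  have gg: "g' \<otimes>\<^bsub>G\<^esub> g = (\<lambda>i. 0)"
  proof (intro ext)
    fix i show "(g' \<otimes>\<^bsub>G\<^esub> g) i = 0"
    proof (cases "i < k")
      case True
      then have "g i < p ^ r i" using g by (simp add: cp_carrier)
      then show ?thesis using True neg_mod2[of "g i" "p ^ r i"] by (simp add: cp_mult g'_def)
    qed (simp add: cp_mult)
  qed
  have cc: "(\<lambda>x\<in>Is k. (c' x + c x + g' (fst x) * g (snd x)) mod p ^ r (snd x)) = (\<lambda>x\<in>Is k. 0)"
  proof (rule restrict_ext)
    fix x assume x: "x \<in> Is k"
    show "(c' x + c x + g' (fst x) * g (snd x)) mod p ^ r (snd x) = 0"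
      using x neg_mod_aux[where m="p ^ r (snd x)" and c="c x" and a="g' (fst x) * g (snd x)"] M_pos
      by (simp add: c'_def add.assoc)
  qed
  have "(g', c') \<otimes>\<^bsub>ext_grp p r k\<^esub> a = \<one>\<^bsub>ext_grp p r k\<^esub>"
    unfolding ext_mult ext_one ac fst_conv snd_conv gg cc by simp
  moreover have "(g', c') \<in> carrier (ext_grp p r k)" unfolding ext_carrier using g'c c'c by simp
  ultimately show "\<exists>y\<in>carrier (ext_grp p r k). y \<otimes>\<^bsub>ext_grp p r k\<^esub> a = \<one>\<^bsub>ext_grp p r k\<^esub>"
    by blast
qed

end


context cpset begin

abbreviation "E \<equiv> ext_grp p r k"

lemma p_pos[simp]: "0 < p"
  using prime_gt_0_nat[OF pprime] .

lemma Mgt1: "j < k \<Longrightarrow> 1 < p ^ r j"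
  using pw_gt1[OF pprime] rpos by auto

lemma zero_KK: "(\<lambda>x\<in>Is k. 0) \<in> KK p r k"
  using M_pos by (auto simp: KK_def)

lemma fst_hom: "fst \<in> hom E G"
  by (auto simp: hom_def ext_grp_def)

lemma fst_surj: "fst ` carrier E = carrier G"
  using zero_KK by (force simp: ext_grp_def)

lemma kernel_E: "kernel E G fst = {\<lambda>i. 0} \<times> KK p r k"
  by (auto simp: kernel_def ext_grp_def cp_one cp_carrier)

lemma kernel_E_center: "kernel E G fst \<subseteq> grp_center E"
proof
  fix z assume "z \<in> kernel E G fst"
  then obtain c where z: "z = (\<lambda>i. 0, c)" "c \<in> KK p r k" by (auto simp: kernel_E)
  have "z \<otimes>\<^bsub>E\<^esub> y = y \<otimes>\<^bsub>E\<^esub> z" if "y \<in> carrier E" for y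
  proof -
    have "(\<lambda>x\<in>Is k. (c x + snd y x + 0 * fst y (snd x)) mod p ^ r (snd x)) =
          (\<lambda>x\<in>Is k. (snd y x + c x + fst y (fst x) * 0) mod p ^ r (snd x))"
      by (intro restrict_ext) (simp add: add.commute)
    then show ?thesis using z by (simp add: ext_grp_def cp_comm)
  qed
  then show "z \<in> grp_center E" using z by (auto simp: grp_center_def ext_grp_def cp_carrier M_pos)
qed

definition dl :: "nat \<times> nat \<Rightarrow> (nat \<Rightarrow> nat) \<times> (nat \<times> nat \<Rightarrow> nat)" where
  "dl x0 = (\<lambda>i. 0, \<lambda>x\<in>Is k. if x = x0 then 1 else 0)"

lemma dl_derived: assumes x0: "x0 \<in> Is k" shows "dl x0 \<in> derived E (carrier E)"
proof -
  obtain i j where ij: "x0 = (i, j)" "i < j" "j < k" using x0 by (cases x0) (auto simp: Is_def)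
  define u where "u = (\<lambda>l. (ev l, \<lambda>x\<in>Is k. (0::nat)))"
  have ui: "u i \<in> carrier E" and uj: "u j \<in> carrier E"
    using ij ev_carrier[OF pprime] rpos zero_KK by (auto simp: u_def ext_grp_def)
  have dc: "dl x0 \<in> carrier E"
    using Mgt1 M_pos by (auto simp: dl_def ext_grp_def KK_def cp_carrier Is_def)
  have f1: "ev i \<otimes>\<^bsub>G\<^esub> ev j = (\<lambda>i. 0) \<otimes>\<^bsub>G\<^esub> (ev j \<otimes>\<^bsub>G\<^esub> ev i)"
    by (intro ext) (simp add: cp_mult add.commute)
  have f2: "(\<lambda>x\<in>Is k. (restrict (\<lambda>x. 0::nat) (Is k) x + restrict (\<lambda>x. 0) (Is k) x + ev i (fst x) * ev j (snd x)) mod p ^ r (snd x))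
     = (\<lambda>x\<in>Is k. (restrict (\<lambda>x. if x = x0 then 1 else 0) (Is k) x +
          restrict (\<lambda>x. (restrict (\<lambda>x. 0::nat) (Is k) x + restrict (\<lambda>x. 0) (Is k) x + ev j (fst x) * ev i (snd x)) mod p ^ r (snd x)) (Is k) x
          + 0 * ev i (snd x)) mod p ^ r (snd x))"
  proof (rule restrict_ext)
    fix x assume x: "x \<in> Is k"
    obtain a b where ab: "x = (a, b)" "a < b" "b < k" using x by (cases x) (auto simp: Is_def)
    have m1: "1 mod p ^ r b = 1" by (rule mod_less[OF Mgt1[OF ab(3)]])
    have z: "ev j (fst x) * ev i (snd x) = 0" using ab ij by (auto simp: ev_def)
    have o: "ev i (fst x) * ev j (snd x) = (if x = x0 then 1 else 0)" using ab ij by (auto simp: ev_def)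
    have M1: "1 mod p ^ r (snd x) = 1" using m1 ab by simp
    show "(restrict (\<lambda>x. 0::nat) (Is k) x + restrict (\<lambda>x. 0) (Is k) x + ev i (fst x) * ev j (snd x)) mod p ^ r (snd x)
     = (restrict (\<lambda>x. if x = x0 then 1 else 0) (Is k) x +
          restrict (\<lambda>x. (restrict (\<lambda>x. 0::nat) (Is k) x + restrict (\<lambda>x. 0) (Is k) x + ev j (fst x) * ev i (snd x)) mod p ^ r (snd x)) (Is k) x
          + 0 * ev i (snd x)) mod p ^ r (snd x)"
      using x by (simp add: z o M1)
  qed
  have "u i \<otimes>\<^bsub>E\<^esub> u j = dl x0 \<otimes>\<^bsub>E\<^esub> (u j \<otimes>\<^bsub>E\<^esub> u i)"
    unfolding u_def dl_def ext_grp_def using f1 f2 by simp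
  then have "u i \<otimes>\<^bsub>E\<^esub> u j \<otimes>\<^bsub>E\<^esub> inv\<^bsub>E\<^esub> u i \<otimes>\<^bsub>E\<^esub> inv\<^bsub>E\<^esub> u j = dl x0"
    using group.cm_unique[OF ext_group ui uj dc] by simp
  then have "dl x0 \<in> derived_set E (carrier E)" using ui uj by blast
  then show ?thesis unfolding derived_def by (rule generate.incl)
qed

lemma kernel_E_derived: "kernel E G fst \<subseteq> derived E (carrier E)"
proof -
  have "(\<lambda>i. 0, c) \<in> derived E (carrier E)" if "c \<in> KK p r k" for c
    using that
  proof (induction "sum c (Is k)" arbitrary: c rule: less_induct)
    case less
    have cK: "c \<in> KK p r k" by (rule less.prems)
    have cext: "restrict c (Is k) = c" using cK by (simp add: KK_def PiE_def extensional_restrict)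
    show ?case
    proof (cases "\<forall>x\<in>Is k. c x = 0")
      case True
      then have "c = (\<lambda>x\<in>Is k. 0)" using cext by (metis restrict_ext)
      then have "(\<lambda>i. 0, c) = \<one>\<^bsub>E\<^esub>" by (simp add: ext_grp_def)
      then show ?thesis unfolding derived_def by (metis generate.one)
    next
      case False
      then obtain x0 where x0: "x0 \<in> Is k" "c x0 > 0" by auto
      define c' where "c' = c(x0 := c x0 - 1)"
      have lt2: "c x0 < p ^ r (snd x0)" using cK x0 by (auto simp: KK_def)
      have c'K: "c' \<in> KK p r k"
      proof -
        have "c(x0 := c x0 - 1) \<in> Pi\<^sub>E (insert x0 (Is k)) (\<lambda>x. {..<p ^ r (snd x)})"
          by (rule PiE_fun_upd) (use x0 lt2 cK in \<open>auto simp: KK_def\<close>)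
        then show ?thesis using x0 by (simp add: c'_def KK_def insert_absorb)
      qed
      have le: "\<forall>x\<in>Is k. c' x \<le> c x" by (simp add: c'_def)
      have ex: "\<exists>x\<in>Is k. c' x < c x" using x0 by (auto simp: c'_def)
      have lt: "sum c' (Is k) < sum c (Is k)"
        by (rule sum_strict_mono_ex1[OF finite_Is le ex])
      have d1: "(\<lambda>i. 0, c') \<in> derived E (carrier E)" using less.hyps[OF lt c'K] .
      have "(\<lambda>i. 0, c') \<otimes>\<^bsub>E\<^esub> dl x0 = (\<lambda>i. 0, c)"
      proof -
        have "(\<lambda>x\<in>Is k. (c' x + restrict (\<lambda>y. if y = x0 then 1 else 0) (Is k) x + 0 * 0) mod p ^ r (snd x)) = restrict c (Is k)"
        proof (intro restrict_ext)
          fix x assume x: "x \<in> Is k"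
          have cx: "c x < p ^ r (snd x)" using cK x by (auto simp: KK_def)
          show "(c' x + restrict (\<lambda>y. if y = x0 then 1 else 0) (Is k) x + 0 * 0) mod p ^ r (snd x) = c x"
          proof (cases "x = x0")
            case True
            then show ?thesis using x cx x0 by (simp add: c'_def)
          next
            case False
            then show ?thesis using x cx by (simp add: c'_def)
          qed
        qed
        moreover have "(\<lambda>i::nat. 0::nat) \<otimes>\<^bsub>G\<^esub> (\<lambda>i. 0) = (\<lambda>i. 0)" by (intro ext) (simp add: cp_mult)
        ultimately show ?thesis using cext unfolding ext_mult dl_def fst_conv snd_conv by simp
      qed
      then show ?thesis using generate.eng[OF d1[unfolded derived_def] dl_derived[OF x0(1), unfolded derived_def]]
        unfolding derived_def by simp
    qed
  qed
  then show ?thesis by (auto simp: kernel_E)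
qed

end


lemma transport_nat:
  fixes A :: "('x, 'm) monoid_scheme" and \<pi> :: "'x \<Rightarrow> 'a" and Gt :: "('a,'b) monoid_scheme"
  assumes st: "stem_extension A \<pi> Gt" and fin: "finite (carrier A)"
  shows "\<exists>(B::nat monoid) \<pi>'. stem_extension B \<pi>' Gt \<and> card (kernel B Gt \<pi>') = card (kernel A Gt \<pi>)"
proof -
  obtain f :: "'x \<Rightarrow> nat" and n where fi: "inj_on f (carrier A)"
    using finite_imp_inj_to_nat_seg[OF fin] by blast
  define g where "g = inv_into (carrier A) f"
  have gf[simp]: "x \<in> carrier A \<Longrightarrow> g (f x) = x" for x using fi by (simp add: g_def)
  have gin: "y \<in> f ` carrier A \<Longrightarrow> g y \<in> carrier A" for y by (auto simp: g_def inv_into_into)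
  have fg: "y \<in> f ` carrier A \<Longrightarrow> f (g y) = y" for y by (auto simp: g_def f_inv_into_f)
  have grA: "group A" and grG: "group Gt" and hom: "\<pi> \<in> hom A Gt" and sur: "\<pi> ` carrier A = carrier Gt"
    and ker: "kernel A Gt \<pi> \<subseteq> grp_center A \<inter> derived A (carrier A)"
    using st by (auto simp: stem_extension_def)
  interpret A: group A by (rule grA)
  define B :: "nat monoid" where "B = \<lparr> carrier = f ` carrier A,
     monoid.mult = (\<lambda>x y. f (g x \<otimes>\<^bsub>A\<^esub> g y)), monoid.one = f \<one>\<^bsub>A\<^esub> \<rparr>"
  have Bc[simp]: "carrier B = f ` carrier A" and Bm[simp]: "x \<otimes>\<^bsub>B\<^esub> y = f (g x \<otimes>\<^bsub>A\<^esub> g y)"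
    and Bo[simp]: "\<one>\<^bsub>B\<^esub> = f \<one>\<^bsub>A\<^esub>" for x y by (simp_all add: B_def)
  have monB: "monoid B"
  proof (rule monoidI)
    fix x y assume "x \<in> carrier B" "y \<in> carrier B"
    then show "x \<otimes>\<^bsub>B\<^esub> y \<in> carrier B" using gin by simp
  next
    show "\<one>\<^bsub>B\<^esub> \<in> carrier B" by simp
  next
    fix x y z assume x: "x \<in> carrier B" and y: "y \<in> carrier B" and z: "z \<in> carrier B"
    have gx: "g x \<in> carrier A" and gy: "g y \<in> carrier A" and gz: "g z \<in> carrier A"
      using x y z gin by auto
    have "g (f (g x \<otimes>\<^bsub>A\<^esub> g y)) = g x \<otimes>\<^bsub>A\<^esub> g y" using gx gy by simp
    moreover have "g (f (g y \<otimes>\<^bsub>A\<^esub> g z)) = g y \<otimes>\<^bsub>A\<^esub> g z" using gz gy by simp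
    ultimately show "x \<otimes>\<^bsub>B\<^esub> y \<otimes>\<^bsub>B\<^esub> z = x \<otimes>\<^bsub>B\<^esub> (y \<otimes>\<^bsub>B\<^esub> z)"
      using gx gy gz by (simp only: Bm A.m_assoc)
  next
    fix x assume x: "x \<in> carrier B"
    have gx: "g x \<in> carrier A" using x gin by auto
    have "\<one>\<^bsub>B\<^esub> \<otimes>\<^bsub>B\<^esub> x = f (g x)" using gx by simp
    then show "\<one>\<^bsub>B\<^esub> \<otimes>\<^bsub>B\<^esub> x = x" using fg x by simp
  next
    fix x assume x: "x \<in> carrier B"
    have gx: "g x \<in> carrier A" using x gin by auto
    have "x \<otimes>\<^bsub>B\<^esub> \<one>\<^bsub>B\<^esub> = f (g x)" using gx by simp
    then show "x \<otimes>\<^bsub>B\<^esub> \<one>\<^bsub>B\<^esub> = x" using fg x by simp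
  qed
  have fhom: "f \<in> hom A B" by (auto simp: hom_def)
  have fiso: "f \<in> iso A B" using fhom fi by (auto simp: iso_def bij_betw_def)
  have isoAB: "A \<cong> B" unfolding is_iso_def using fiso by blast
  have grB: "group B" by (rule A.iso_imp_group[OF isoAB monB])
  have gh: "group_hom A B f" unfolding group_hom_def group_hom_axioms_def using grA grB fhom by blast
  define \<pi>' where "\<pi>' = \<pi> \<circ> g"
  have hom': "\<pi>' \<in> hom B Gt"
    using hom by (auto simp: hom_def \<pi>'_def gin)
  have sur': "\<pi>' ` carrier B = carrier Gt"
  proof -
    have "\<pi>' ` carrier B = \<pi> ` (g ` f ` carrier A)" by (simp add: \<pi>'_def image_comp)
    also have "g ` f ` carrier A = carrier A" by (force simp: image_comp)
    finally show ?thesis using sur by simp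
  qed
  have kerB: "kernel B Gt \<pi>' = f ` kernel A Gt \<pi>"
    by (auto simp: kernel_def \<pi>'_def)
  have cen: "f ` grp_center A \<subseteq> grp_center B"
    by (auto simp: grp_center_def)
  have der: "derived B (carrier B) = f ` derived A (carrier A)"
    using group_hom.derived_img[OF gh, of "carrier A"] by simp
  have "kernel B Gt \<pi>' \<subseteq> grp_center B \<inter> derived B (carrier B)"
    using ker cen der kerB by blast
  then have "stem_extension B \<pi>' Gt"
    using grB grG hom' sur' by (simp add: stem_extension_def)
  moreover have "card (kernel B Gt \<pi>') = card (kernel A Gt \<pi>)"
    unfolding kerB by (rule card_image) (rule inj_on_subset[OF fi], auto simp: kernel_def)
  ultimately show ?thesis by blast
qed



lemma finite_cp: "finite (carrier (cyc_prod p r k))"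
proof -
  have "carrier (cyc_prod p r k) \<subseteq> (\<lambda>f i. if i < k then f i else 0) ` PiE {..<k} (\<lambda>i. {..<p ^ r i})"
  proof
    fix f assume f: "f \<in> carrier (cyc_prod p r k)"
    then have "restrict f {..<k} \<in> PiE {..<k} (\<lambda>i. {..<p ^ r i})" by (auto simp: cp_carrier)
    moreover have "f = (\<lambda>i. if i < k then restrict f {..<k} i else 0)"
      using f by (auto simp: cp_carrier intro!: ext)
    ultimately show "f \<in> (\<lambda>f i. if i < k then f i else 0) ` PiE {..<k} (\<lambda>i. {..<p ^ r i})" by blast
  qed
  then show ?thesis by (rule finite_subset) (intro finite_imageI finite_PiE; simp)
qed

context cpset begin

lemma lower_bound: assumes grG: "group G"
  shows "\<exists>(B::nat monoid) \<pi>'. stem_extension B \<pi>' G \<and> card (kernel B G \<pi>') = card (KK p r k)"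
proof -
  have "stem_extension E fst G"
    using ext_group grG fst_hom fst_surj kernel_E_center kernel_E_derived
    by (simp add: stem_extension_def)
  moreover have "finite (carrier E)" using finite_cp finite_KK by (simp add: ext_grp_def)
  moreover have "card (kernel E G fst) = card (KK p r k)"
    by (simp add: kernel_E card_cartesian_product_singleton)
  ultimately show ?thesis using transport_nat by metis
qed

lemma gen_D: assumes grG: "group G" and x1: "x1 \<in> carrier G"
  and gx1: "generate G {x1} = {f \<in> carrier G. \<forall>i. i \<noteq> 0 \<longrightarrow> f i = 0}"
  and k2: "k \<ge> 2"
  shows "generate G {x1 [^]\<^bsub>G\<^esub> (p ^ r 1)} =
     {f \<in> carrier G. (\<forall>i. i \<noteq> 0 \<longrightarrow> f i = 0) \<and> p ^ r 1 dvd f 0}"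
proof -
  interpret G: group G by (rule grG)
  have y: "x1 [^]\<^bsub>G\<^esub> (p ^ r 1) \<in> carrier G" using x1 by simp
  have gy: "generate G {x1 [^]\<^bsub>G\<^esub> (p ^ r 1)} = {(x1 [^]\<^bsub>G\<^esub> (p ^ r 1)) [^]\<^bsub>G\<^esub> n | n. n \<in> (UNIV::nat set)}"
    by (rule G.generate_pow_on_finite_carrier[OF finite_cp y])
  have gx: "generate G {x1} = {x1 [^]\<^bsub>G\<^esub> n | n. n \<in> (UNIV::nat set)}"
    by (rule G.generate_pow_on_finite_carrier[OF finite_cp x1])
  have x1z: "\<And>i. i \<noteq> 0 \<Longrightarrow> x1 i = 0"
    using gx1 generate.incl[of x1 "{x1}" G] by auto
  have dv: "p ^ r 1 dvd p ^ r 0" using dvd_pw[of 0 1] k2 by simp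
  show ?thesis
  proof (intro equalityI subsetI)
    fix f assume "f \<in> generate G {x1 [^]\<^bsub>G\<^esub> (p ^ r 1)}"
    then obtain n where fn: "f = x1 [^]\<^bsub>G\<^esub> (p ^ r 1 * n)" unfolding gy using x1 G.nat_pow_pow by auto
    have fc: "f \<in> carrier G" using fn x1 by simp
    have fe: "f = (\<lambda>i. if i < k then (p ^ r 1 * n * x1 i) mod p ^ r i else 0)"
      unfolding fn by (rule cp_pow[OF x1])
    have "p ^ r 1 dvd f 0" using fe k2 dv by (auto intro!: dvd_mod)
    moreover have "\<forall>i. i \<noteq> 0 \<longrightarrow> f i = 0" using fe x1z by auto
    ultimately show "f \<in> {f \<in> carrier G. (\<forall>i. i \<noteq> 0 \<longrightarrow> f i = 0) \<and> p ^ r 1 dvd f 0}" using fc by blast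
  next
    fix f assume f: "f \<in> {f \<in> carrier G. (\<forall>i. i \<noteq> 0 \<longrightarrow> f i = 0) \<and> p ^ r 1 dvd f 0}"
    then obtain q where q: "f 0 = p ^ r 1 * q" by auto
    have e0: "ev 0 \<in> carrier G" using ev_carrier[OF pprime] rpos k2 by auto
    have "ev 0 \<in> generate G {x1}" unfolding gx1 using e0 by (auto simp: ev_def)
    then obtain n0 where n0: "ev 0 = x1 [^]\<^bsub>G\<^esub> (n0::nat)" unfolding gx by blast
    have "f = ev 0 [^]\<^bsub>G\<^esub> (f 0)"
      using f ev_pow[OF pprime, where r=r and j=0 and k=k and n="f 0"] rpos k2 by (auto simp: cp_carrier intro!: ext)
    also have "\<dots> = (x1 [^]\<^bsub>G\<^esub> (p ^ r 1)) [^]\<^bsub>G\<^esub> (n0 * q)"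
      unfolding n0 q using x1 by (simp add: G.nat_pow_pow ac_simps)
    finally show "f \<in> generate G {x1 [^]\<^bsub>G\<^esub> (p ^ r 1)}" unfolding gy by blast
  qed
qed

end


primrec Pp :: "('c,'d) monoid_scheme \<Rightarrow> (nat \<Rightarrow> 'c) \<Rightarrow> (nat \<Rightarrow> nat) \<Rightarrow> nat \<Rightarrow> 'c" where
  "Pp H l g 0 = \<one>\<^bsub>H\<^esub>"
| "Pp H l g (Suc n) = Pp H l g n \<otimes>\<^bsub>H\<^esub> (l n [^]\<^bsub>H\<^esub> g n)"

locale mainset = cpset +
  fixes H :: "('c,'d) monoid_scheme" and \<pi> :: "'c \<Rightarrow> nat \<Rightarrow> nat"
  assumes stem: "stem_extension H \<pi> (cyc_prod p r k)"
    and finK: "finite (kernel H (cyc_prod p r k) \<pi>)"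
    and bigK: "card (KK p r k) \<le> card (kernel H (cyc_prod p r k) \<pi>)"
begin

abbreviation "K \<equiv> kernel H G \<pi>"

lemma grH: "group H" and grG: "group G" and homp: "\<pi> \<in> hom H G" and surp: "\<pi> ` carrier H = carrier G"
  and Kc: "K \<subseteq> grp_center H" and Kd: "K \<subseteq> derived H (carrier H)"
  using stem by (auto simp: stem_extension_def)

sublocale H: group H by (rule grH)
sublocale GG: group G by (rule grG)
sublocale hh: group_hom H G \<pi> using grH grG homp by (simp add: group_hom_def group_hom_axioms_def)

lemma K_sub: "subgroup K H" by (rule hh.subgroup_kernel)

lemma inK: "z \<in> K \<longleftrightarrow> z \<in> carrier H \<and> \<pi> z = \<one>\<^bsub>G\<^esub>" by (simp add: kernel_def)

lemma cent: "z \<in> K \<Longrightarrow> y \<in> carrier H \<Longrightarrow> z \<otimes>\<^bsub>H\<^esub> y = y \<otimes>\<^bsub>H\<^esub> z"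
  using Kc by (auto simp: grp_center_def)

definition cm :: "'c \<Rightarrow> 'c \<Rightarrow> 'c" where
  "cm a b = a \<otimes>\<^bsub>H\<^esub> b \<otimes>\<^bsub>H\<^esub> inv\<^bsub>H\<^esub> a \<otimes>\<^bsub>H\<^esub> inv\<^bsub>H\<^esub> b"

lemma cm_closed[simp]: "a \<in> carrier H \<Longrightarrow> b \<in> carrier H \<Longrightarrow> cm a b \<in> carrier H"
  by (simp add: cm_def)

lemma cm_K: assumes a: "a \<in> carrier H" and b: "b \<in> carrier H" shows "cm a b \<in> K"
proof -
  have pa: "\<pi> a \<in> carrier G" and pb: "\<pi> b \<in> carrier G" using a b by auto
  have "\<pi> (cm a b) = \<pi> a \<otimes>\<^bsub>G\<^esub> \<pi> b \<otimes>\<^bsub>G\<^esub> inv\<^bsub>G\<^esub> \<pi> a \<otimes>\<^bsub>G\<^esub> inv\<^bsub>G\<^esub> \<pi> b"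
    using a b by (simp add: cm_def)
  also have "\<dots> = \<one>\<^bsub>G\<^esub>"
    by (rule GG.cm_unique[OF pa pb]) (use pa pb in \<open>simp_all add: cp_comm[where f="\<pi> a"]\<close>)
  finally show ?thesis using a b by (simp add: inK)
qed

lemma cm_swap: "a \<in> carrier H \<Longrightarrow> b \<in> carrier H \<Longrightarrow> a \<otimes>\<^bsub>H\<^esub> b = cm a b \<otimes>\<^bsub>H\<^esub> (b \<otimes>\<^bsub>H\<^esub> a)"
  unfolding cm_def by (rule H.cm_swap)

lemma cm_char: "a \<in> carrier H \<Longrightarrow> b \<in> carrier H \<Longrightarrow> z \<in> carrier H \<Longrightarrow>
   a \<otimes>\<^bsub>H\<^esub> b = z \<otimes>\<^bsub>H\<^esub> (b \<otimes>\<^bsub>H\<^esub> a) \<Longrightarrow> cm a b = z"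
  unfolding cm_def by (rule H.cm_unique)

lemma cmK_carrier: "a \<in> carrier H \<Longrightarrow> b \<in> carrier H \<Longrightarrow> cm a b \<in> carrier H" by simp

lemma cm_mult_r: assumes a: "a \<in> carrier H" and b: "b \<in> carrier H" and d: "d \<in> carrier H"
  shows "cm a (b \<otimes>\<^bsub>H\<^esub> d) = cm a b \<otimes>\<^bsub>H\<^esub> cm a d"
proof (rule cm_char)
  have c2: "cm a d \<in> K" using cm_K a d by blast
  have "a \<otimes>\<^bsub>H\<^esub> (b \<otimes>\<^bsub>H\<^esub> d) = (a \<otimes>\<^bsub>H\<^esub> b) \<otimes>\<^bsub>H\<^esub> d" using a b d by (simp add: H.m_assoc)
  also have "\<dots> = cm a b \<otimes>\<^bsub>H\<^esub> (b \<otimes>\<^bsub>H\<^esub> (a \<otimes>\<^bsub>H\<^esub> d))"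
    using a b d by (simp add: cm_swap[OF a b] H.m_assoc)
  also have "\<dots> = cm a b \<otimes>\<^bsub>H\<^esub> (b \<otimes>\<^bsub>H\<^esub> (cm a d \<otimes>\<^bsub>H\<^esub> (d \<otimes>\<^bsub>H\<^esub> a)))"
    using cm_swap[OF a d] by simp
  also have "\<dots> = cm a b \<otimes>\<^bsub>H\<^esub> ((b \<otimes>\<^bsub>H\<^esub> cm a d) \<otimes>\<^bsub>H\<^esub> (d \<otimes>\<^bsub>H\<^esub> a))"
    using a b d by (simp add: H.m_assoc)
  also have "\<dots> = cm a b \<otimes>\<^bsub>H\<^esub> ((cm a d \<otimes>\<^bsub>H\<^esub> b) \<otimes>\<^bsub>H\<^esub> (d \<otimes>\<^bsub>H\<^esub> a))"
    using cent[OF c2 b] by simp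
  also have "\<dots> = (cm a b \<otimes>\<^bsub>H\<^esub> cm a d) \<otimes>\<^bsub>H\<^esub> ((b \<otimes>\<^bsub>H\<^esub> d) \<otimes>\<^bsub>H\<^esub> a)"
    using a b d by (simp add: H.m_assoc)
  finally show "a \<otimes>\<^bsub>H\<^esub> (b \<otimes>\<^bsub>H\<^esub> d) = (cm a b \<otimes>\<^bsub>H\<^esub> cm a d) \<otimes>\<^bsub>H\<^esub> ((b \<otimes>\<^bsub>H\<^esub> d) \<otimes>\<^bsub>H\<^esub> a)" .
qed (use a b d in auto)

lemma cm_mult_l: assumes a: "a \<in> carrier H" and b: "b \<in> carrier H" and d: "d \<in> carrier H"
  shows "cm (a \<otimes>\<^bsub>H\<^esub> b) d = cm a d \<otimes>\<^bsub>H\<^esub> cm b d"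
proof (rule cm_char)
  have c1: "cm a d \<in> K" using cm_K a d by blast
  have c2: "cm b d \<in> K" using cm_K b d by blast
  have "(a \<otimes>\<^bsub>H\<^esub> b) \<otimes>\<^bsub>H\<^esub> d = a \<otimes>\<^bsub>H\<^esub> (cm b d \<otimes>\<^bsub>H\<^esub> (d \<otimes>\<^bsub>H\<^esub> b))"
    using a b d by (simp add: H.m_assoc cm_swap[OF b d])
  also have "\<dots> = (a \<otimes>\<^bsub>H\<^esub> cm b d) \<otimes>\<^bsub>H\<^esub> (d \<otimes>\<^bsub>H\<^esub> b)"
    using a b d by (simp add: H.m_assoc)
  also have "\<dots> = (cm b d \<otimes>\<^bsub>H\<^esub> a) \<otimes>\<^bsub>H\<^esub> (d \<otimes>\<^bsub>H\<^esub> b)"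
    using cent[OF c2 a] by simp
  also have "\<dots> = cm b d \<otimes>\<^bsub>H\<^esub> ((a \<otimes>\<^bsub>H\<^esub> d) \<otimes>\<^bsub>H\<^esub> b)"
    using a b d by (simp add: H.m_assoc)
  also have "\<dots> = cm b d \<otimes>\<^bsub>H\<^esub> ((cm a d \<otimes>\<^bsub>H\<^esub> (d \<otimes>\<^bsub>H\<^esub> a)) \<otimes>\<^bsub>H\<^esub> b)"
    using cm_swap[OF a d] by simp
  also have "\<dots> = (cm b d \<otimes>\<^bsub>H\<^esub> cm a d) \<otimes>\<^bsub>H\<^esub> (d \<otimes>\<^bsub>H\<^esub> (a \<otimes>\<^bsub>H\<^esub> b))"
    using a b d by (simp add: H.m_assoc)
  also have "\<dots> = (cm a d \<otimes>\<^bsub>H\<^esub> cm b d) \<otimes>\<^bsub>H\<^esub> (d \<otimes>\<^bsub>H\<^esub> (a \<otimes>\<^bsub>H\<^esub> b))"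
    using cent[OF c2, of "cm a d"] a d by simp
  finally show "(a \<otimes>\<^bsub>H\<^esub> b) \<otimes>\<^bsub>H\<^esub> d = (cm a d \<otimes>\<^bsub>H\<^esub> cm b d) \<otimes>\<^bsub>H\<^esub> (d \<otimes>\<^bsub>H\<^esub> (a \<otimes>\<^bsub>H\<^esub> b))" .
qed (use a b d in auto)

lemma cm_K_r: "a \<in> carrier H \<Longrightarrow> z \<in> K \<Longrightarrow> cm a z = \<one>\<^bsub>H\<^esub>"
  using cent[of z a] by (intro cm_char) (auto simp: inK)

lemma cm_K_l: "a \<in> carrier H \<Longrightarrow> z \<in> K \<Longrightarrow> cm z a = \<one>\<^bsub>H\<^esub>"
  using cent[of z a] by (intro cm_char) (auto simp: inK)

lemma cm_self: "a \<in> carrier H \<Longrightarrow> cm a a = \<one>\<^bsub>H\<^esub>"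
  by (rule cm_char) auto

lemma cm_comm_iff: "a \<in> carrier H \<Longrightarrow> b \<in> carrier H \<Longrightarrow> a \<otimes>\<^bsub>H\<^esub> b = b \<otimes>\<^bsub>H\<^esub> a \<longleftrightarrow> cm a b = \<one>\<^bsub>H\<^esub>"
  using cm_swap[of a b] cm_char[of a b "\<one>\<^bsub>H\<^esub>"] by auto

lemma cm_inv: assumes a: "a \<in> carrier H" and b: "b \<in> carrier H"
  shows "cm a b \<otimes>\<^bsub>H\<^esub> cm b a = \<one>\<^bsub>H\<^esub>"
proof -
  have "\<one>\<^bsub>H\<^esub> \<otimes>\<^bsub>H\<^esub> (a \<otimes>\<^bsub>H\<^esub> b) = (cm a b \<otimes>\<^bsub>H\<^esub> cm b a) \<otimes>\<^bsub>H\<^esub> (a \<otimes>\<^bsub>H\<^esub> b)"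
    using a b cm_swap[OF a b] cm_swap[OF b a] by (simp add: H.m_assoc)
  then show ?thesis using a b by (metis H.m_closed H.one_closed H.r_cancel cm_closed)
qed

lemma cm_pow_r: "a \<in> carrier H \<Longrightarrow> b \<in> carrier H \<Longrightarrow> cm a (b [^]\<^bsub>H\<^esub> (n::nat)) = cm a b [^]\<^bsub>H\<^esub> n"
  by (induction n) (auto simp: cm_mult_r cm_K_r K_sub subgroup.one_closed)

lemma cm_pow_l: "a \<in> carrier H \<Longrightarrow> b \<in> carrier H \<Longrightarrow> cm (a [^]\<^bsub>H\<^esub> (n::nat)) b = cm a b [^]\<^bsub>H\<^esub> n"
  by (induction n) (auto simp: cm_mult_l cm_K_l K_sub subgroup.one_closed)

lemma decomp: "a \<in> carrier H \<Longrightarrow> a' \<in> carrier H \<Longrightarrow> \<pi> a = \<pi> a' \<Longrightarrow>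
   a' = a \<otimes>\<^bsub>H\<^esub> (inv\<^bsub>H\<^esub> a \<otimes>\<^bsub>H\<^esub> a') \<and> inv\<^bsub>H\<^esub> a \<otimes>\<^bsub>H\<^esub> a' \<in> K"
  by (auto simp: inK H.m_assoc[symmetric])

lemma cm_resp: assumes a: "a \<in> carrier H" "a' \<in> carrier H" "\<pi> a = \<pi> a'"
  and b: "b \<in> carrier H" "b' \<in> carrier H" "\<pi> b = \<pi> b'"
  shows "cm a' b' = cm a b"
proof -
  obtain z where z: "a' = a \<otimes>\<^bsub>H\<^esub> z" "z \<in> K" using decomp[OF a] by blast
  obtain w where w: "b' = b \<otimes>\<^bsub>H\<^esub> w" "w \<in> K" using decomp[OF b] by blast
  have zc: "z \<in> carrier H" and wc: "w \<in> carrier H" using z w by (auto simp: inK)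
  show ?thesis using a b zc wc z w
    by (simp add: cm_mult_l cm_mult_r cm_K_l cm_K_r)
qed

end


context mainset begin

definition lift :: "nat \<Rightarrow> 'c" where
  "lift j = (SOME a. a \<in> carrier H \<and> \<pi> a = ev j)"

lemma lift: "j < k \<Longrightarrow> lift j \<in> carrier H \<and> \<pi> (lift j) = ev j"
proof -
  assume j: "j < k"
  have "ev j \<in> carrier G" using ev_carrier[OF pprime] rpos j by auto
  then have "\<exists>a. a \<in> carrier H \<and> \<pi> a = ev j" using surp by (metis imageE)
  then show ?thesis unfolding lift_def by (rule someI_ex)
qed

lemma lift_c[simp]: "j < k \<Longrightarrow> lift j \<in> carrier H" using lift by blast
lemma lift_p[simp]: "j < k \<Longrightarrow> \<pi> (lift j) = ev j" using lift by blast

abbreviation "P g n \<equiv> Pp H lift g n"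

lemma P_c: "n \<le> k \<Longrightarrow> P g n \<in> carrier H"
  by (induction n) auto

lemma P_pi: assumes g: "g \<in> carrier G" shows "n \<le> k \<Longrightarrow> \<pi> (P g n) = (\<lambda>i. if i < n then g i else 0)"
proof (induction n)
  case 0 then show ?case by (simp add: cp_one)
next
  case (Suc n)
  have n: "n < k" using Suc by simp
  have "\<pi> (P g (Suc n)) = \<pi> (P g n) \<otimes>\<^bsub>G\<^esub> (ev n [^]\<^bsub>G\<^esub> g n)"
    using n P_c[of n g] by (simp add: hh.hom_nat_pow)
  also have "\<dots> = (\<lambda>i. if i < Suc n then g i else 0)"
    using Suc n g rpos by (auto simp: ev_pow[OF pprime] cp_mult cp_carrier intro!: ext)
  finally show ?case .
qed

lemma P_full: "g \<in> carrier G \<Longrightarrow> \<pi> (P g k) = g"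
  using P_pi[of g k] by (auto simp: cp_carrier intro!: ext)

lemma gen: assumes cl: "\<And>x y. x \<in> carrier H \<Longrightarrow> y \<in> carrier H \<Longrightarrow> Q x \<Longrightarrow> Q y \<Longrightarrow> Q (x \<otimes>\<^bsub>H\<^esub> y)"
  and QK: "\<And>z. z \<in> K \<Longrightarrow> Q z" and Ql: "\<And>j. j < k \<Longrightarrow> Q (lift j)"
  and b: "b \<in> carrier H"
  shows "Q b"
proof -
  have Q1: "Q \<one>\<^bsub>H\<^esub>" using QK by (simp add: inK)
  have Qp: "Q (lift j [^]\<^bsub>H\<^esub> (m::nat))" if "j < k" for j m
    using that by (induction m) (auto simp: Q1 cl Ql)
  have QP: "n \<le> k \<Longrightarrow> Q (P g n)" for g n
    by (induction n) (auto simp: Q1 Qp cl P_c)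
  have pb: "\<pi> b \<in> carrier G" using b by simp
  obtain z where bz: "b = P (\<pi> b) k \<otimes>\<^bsub>H\<^esub> z" and zK: "z \<in> K"
    using decomp[OF P_c[of k "\<pi> b"] b] P_full[OF pb] by auto
  have zc: "z \<in> carrier H" using zK by (simp add: inK)
  have "Q (P (\<pi> b) k \<otimes>\<^bsub>H\<^esub> z)"
    by (rule cl[OF P_c[of k "\<pi> b"] zc QP[of k "\<pi> b"] QK[OF zK]]) simp_all
  then show ?thesis using bz by simp
qed

definition cc :: "nat \<times> nat \<Rightarrow> 'c" where "cc x = cm (lift (fst x)) (lift (snd x))"

lemma cc_K: "x \<in> Is k \<Longrightarrow> cc x \<in> K"
  unfolding cc_def Is_def by (auto intro!: cm_K)

lemma cc_c: "x \<in> Is k \<Longrightarrow> cc x \<in> carrier H"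
  using cc_K by (auto simp: inK)

lemma cc_ord: assumes x: "x \<in> Is k" shows "cc x [^]\<^bsub>H\<^esub> (p ^ r (snd x)) = \<one>\<^bsub>H\<^esub>"
proof -
  have fx: "fst x < k" and sx: "snd x < k" using x by (auto simp: Is_def)
  have "\<pi> (lift (snd x) [^]\<^bsub>H\<^esub> (p ^ r (snd x))) = \<one>\<^bsub>G\<^esub>"
    using sx rpos by (auto simp: hh.hom_nat_pow ev_pow[OF pprime] cp_one intro!: ext)
  then have "lift (snd x) [^]\<^bsub>H\<^esub> (p ^ r (snd x)) \<in> K" using sx by (simp add: inK)
  then show ?thesis unfolding cc_def using fx sx by (simp add: cm_pow_r[symmetric] cm_K_r)
qed

lemma pow_mod: assumes c: "c \<in> carrier H" and o: "c [^]\<^bsub>H\<^esub> (M::nat) = \<one>\<^bsub>H\<^esub>"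
  shows "c [^]\<^bsub>H\<^esub> (s::nat) = c [^]\<^bsub>H\<^esub> (s mod M)"
proof -
  have "c [^]\<^bsub>H\<^esub> s = c [^]\<^bsub>H\<^esub> (M * (s div M) + s mod M)" by simp
  also have "\<dots> = c [^]\<^bsub>H\<^esub> (M * (s div M)) \<otimes>\<^bsub>H\<^esub> c [^]\<^bsub>H\<^esub> (s mod M)"
    using c by (simp add: H.nat_pow_mult)
  also have "c [^]\<^bsub>H\<^esub> (M * (s div M)) = (c [^]\<^bsub>H\<^esub> M) [^]\<^bsub>H\<^esub> (s div M)"
    using c by (simp add: H.nat_pow_pow)
  finally show ?thesis using o c by simp
qed

abbreviation "Kg \<equiv> H\<lparr>carrier := K\<rparr>"

lemma Kg_comm: "comm_group Kg"
proof -
  interpret KG: group Kg using H.subgroup_imp_group[OF K_sub] .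
  show ?thesis by (rule KG.group_comm_groupI) (auto simp: cent inK)
qed

sublocale KG: comm_group Kg by (rule Kg_comm)

definition phi :: "(nat \<times> nat \<Rightarrow> nat) \<Rightarrow> 'c" where
  "phi n = finprod Kg (\<lambda>x. cc x [^]\<^bsub>H\<^esub> n x) (Is k)"

lemma pow_K: "x \<in> Is k \<Longrightarrow> cc x [^]\<^bsub>H\<^esub> (m::nat) \<in> K"
  using cc_K[of x] cc_c[of x] by (simp add: inK hh.hom_nat_pow)

lemma pow_Pi: "(\<lambda>x. cc x [^]\<^bsub>H\<^esub> (n x::nat)) \<in> Is k \<rightarrow> carrier Kg"
  using pow_K by auto

lemma phi_K: "phi n \<in> K"
  unfolding phi_def using KG.finprod_closed[OF pow_Pi] by simp

lemma phi_mult: "phi n \<otimes>\<^bsub>H\<^esub> phi m = phi (\<lambda>x\<in>Is k. (n x + m x) mod p ^ r (snd x))"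
proof -
  have "phi n \<otimes>\<^bsub>H\<^esub> phi m = finprod Kg (\<lambda>x. cc x [^]\<^bsub>H\<^esub> n x \<otimes>\<^bsub>H\<^esub> cc x [^]\<^bsub>H\<^esub> m x) (Is k)"
    unfolding phi_def using KG.finprod_multf[OF pow_Pi pow_Pi] by simp
  also have "\<dots> = phi (\<lambda>x\<in>Is k. (n x + m x) mod p ^ r (snd x))"
    unfolding phi_def
  proof (rule KG.finprod_cong')
    show "(\<lambda>x. cc x [^]\<^bsub>H\<^esub> (\<lambda>x\<in>Is k. (n x + m x) mod p ^ r (snd x)) x) \<in> Is k \<rightarrow> carrier Kg"
      using pow_K by auto
    fix x assume x: "x \<in> Is k"
    show "cc x [^]\<^bsub>H\<^esub> n x \<otimes>\<^bsub>H\<^esub> cc x [^]\<^bsub>H\<^esub> m x =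
          cc x [^]\<^bsub>H\<^esub> (\<lambda>x\<in>Is k. (n x + m x) mod p ^ r (snd x)) x"
      using x cc_c[OF x] pow_mod[OF cc_c[OF x] cc_ord[OF x]] by (simp add: H.nat_pow_mult)
  qed simp
  finally show ?thesis .
qed

end


context mainset begin

abbreviation "z0 \<equiv> (\<lambda>x\<in>Is k. 0::nat)"

lemma phi_zero: "phi z0 = \<one>\<^bsub>H\<^esub>"
proof -
  have "finprod Kg (\<lambda>x. cc x [^]\<^bsub>H\<^esub> z0 x) (Is k) = \<one>\<^bsub>Kg\<^esub>"
    by (rule KG.finprod_one_eqI) simp
  then show ?thesis by (simp add: phi_def)
qed

lemma phi_single: assumes x0: "x0 \<in> Is k"
  shows "phi (\<lambda>x\<in>Is k. if x = x0 then s mod p ^ r (snd x0) else 0) = cc x0 [^]\<^bsub>H\<^esub> s"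
proof -
  have "phi (\<lambda>x\<in>Is k. if x = x0 then s mod p ^ r (snd x0) else 0) =
     finprod Kg (\<lambda>x. if x = x0 then cc x [^]\<^bsub>H\<^esub> s else \<one>\<^bsub>Kg\<^esub>) (Is k)"
    unfolding phi_def
  proof (rule KG.finprod_cong')
    show "(\<lambda>x. if x = x0 then cc x [^]\<^bsub>H\<^esub> s else \<one>\<^bsub>Kg\<^esub>) \<in> Is k \<rightarrow> carrier Kg"
      using pow_K by (auto simp: inK)
    fix x assume x: "x \<in> Is k"
    show "cc x [^]\<^bsub>H\<^esub> (\<lambda>x\<in>Is k. if x = x0 then s mod p ^ r (snd x0) else 0) x =
        (if x = x0 then cc x [^]\<^bsub>H\<^esub> s else \<one>\<^bsub>Kg\<^esub>)"
      using x pow_mod[OF cc_c[OF x] cc_ord[OF x], of s] by (auto simp: inK)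
  qed simp
  also have "\<dots> = cc x0 [^]\<^bsub>H\<^esub> s"
    by (rule KG.finprod_singleton_swap[OF x0 finite_Is, of "\<lambda>x. cc x [^]\<^bsub>H\<^esub> s"]) (use pow_K in auto)
  finally show ?thesis .
qed

definition L where "L = phi ` KK p r k"

lemma L_mult: assumes a: "a \<in> L" and b: "b \<in> L" shows "a \<otimes>\<^bsub>H\<^esub> b \<in> L"
proof -
  obtain n where n: "a = phi n" using a by (auto simp: L_def)
  obtain m where m: "b = phi m" using b by (auto simp: L_def)
  have eq: "a \<otimes>\<^bsub>H\<^esub> b = phi (\<lambda>x\<in>Is k. (n x + m x) mod p ^ r (snd x))" using n m phi_mult by simp
  show ?thesis unfolding L_def by (rule image_eqI[where f=phi, OF eq restr_KK])
qed

lemma L_one: "\<one>\<^bsub>H\<^esub> \<in> L"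
  unfolding L_def using phi_zero zero_KK by (metis image_eqI)

lemma L_K: "L \<subseteq> K" unfolding L_def using phi_K by auto

lemma L_inv: assumes a: "a \<in> L" shows "inv\<^bsub>H\<^esub> a \<in> L"
proof -
  obtain n where n: "n \<in> KK p r k" "a = phi n" using a by (auto simp: L_def)
  define m where "m = (\<lambda>x\<in>Is k. (p ^ r (snd x) - n x) mod p ^ r (snd x))"
  have mK: "m \<in> KK p r k" unfolding m_def by (rule restr_KK)
  have "(\<lambda>x\<in>Is k. (n x + m x) mod p ^ r (snd x)) = z0"
  proof (rule restrict_ext)
    fix x assume x: "x \<in> Is k"
    have "n x < p ^ r (snd x)" using n x by (auto simp: KK_def)
    then show "(n x + m x) mod p ^ r (snd x) = 0" using x neg_mod2[of "n x" "p ^ r (snd x)"]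
      by (simp add: m_def add.commute)
  qed
  then have "phi n \<otimes>\<^bsub>H\<^esub> phi m = \<one>\<^bsub>H\<^esub>" using phi_mult phi_zero by metis
  then have "phi m \<otimes>\<^bsub>H\<^esub> phi n = \<one>\<^bsub>H\<^esub>" using cent[OF phi_K[of m], of "phi n"] phi_K by (simp add: inK)
  then have "inv\<^bsub>H\<^esub> (phi n) = phi m" using phi_K by (intro H.inv_equality) (auto simp: inK)
  then show ?thesis using n mK by (auto simp: L_def)
qed

lemma cc_L: assumes x: "x \<in> Is k" shows "cc x \<in> L"
proof -
  have m: "(\<lambda>y\<in>Is k. if y = x then Suc 0 mod p ^ r (snd x) else 0) \<in> KK p r k"
    using Mgt1 by (auto simp: KK_def Is_def)
  have "phi (\<lambda>y\<in>Is k. if y = x then Suc 0 mod p ^ r (snd x) else 0) = cc x [^]\<^bsub>H\<^esub> Suc 0"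
    by (rule phi_single[OF x])
  also have "\<dots> = cc x" using cc_c[OF x] by simp
  finally show ?thesis using m unfolding L_def by (metis image_eqI)
qed

lemma cm_lift_L: assumes j: "j < k" and b: "b \<in> carrier H" shows "cm (lift j) b \<in> L"
  using b
proof (rule gen[where Q = "\<lambda>b. cm (lift j) b \<in> L", rotated 3])
  show "\<And>x y. x \<in> carrier H \<Longrightarrow> y \<in> carrier H \<Longrightarrow> cm (lift j) x \<in> L \<Longrightarrow> cm (lift j) y \<in> L \<Longrightarrow>
      cm (lift j) (x \<otimes>\<^bsub>H\<^esub> y) \<in> L"
    using j by (simp add: cm_mult_r L_mult)
  show "\<And>z. z \<in> K \<Longrightarrow> cm (lift j) z \<in> L" using j by (simp add: cm_K_r L_one)
  fix i assume i: "i < k"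
  consider "j < i" | "i = j" | "i < j" by linarith
  then show "cm (lift j) (lift i) \<in> L"
  proof cases
    case 1 then show ?thesis using cc_L[of "(j, i)"] i by (simp add: cc_def Is_def)
  next
    case 2 then show ?thesis using i by (simp add: cm_self L_one)
  next
    case 3
    have "cc (i, j) \<in> L" using cc_L[of "(i, j)"] 3 j by (simp add: Is_def)
    moreover have "inv\<^bsub>H\<^esub> (cc (i, j)) = cm (lift j) (lift i)"
      using cm_inv[of "lift j" "lift i"] i j unfolding cc_def
      by (intro H.inv_equality) auto
    ultimately show ?thesis using L_inv by metis
  qed
qed

lemma cm_L: assumes a: "a \<in> carrier H" and b: "b \<in> carrier H" shows "cm a b \<in> L"
proof -
  have "\<forall>b\<in>carrier H. cm a b \<in> L" using a
  proof (rule gen[where Q = "\<lambda>a. \<forall>b\<in>carrier H. cm a b \<in> L", rotated 3])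
    show "\<And>x y. x \<in> carrier H \<Longrightarrow> y \<in> carrier H \<Longrightarrow> \<forall>b\<in>carrier H. cm x b \<in> L \<Longrightarrow>
        \<forall>b\<in>carrier H. cm y b \<in> L \<Longrightarrow> \<forall>b\<in>carrier H. cm (x \<otimes>\<^bsub>H\<^esub> y) b \<in> L"
      by (simp add: cm_mult_l L_mult)
    show "\<And>z. z \<in> K \<Longrightarrow> \<forall>b\<in>carrier H. cm z b \<in> L" by (simp add: cm_K_l L_one)
    show "\<And>j. j < k \<Longrightarrow> \<forall>b\<in>carrier H. cm (lift j) b \<in> L" using cm_lift_L by blast
  qed
  then show ?thesis using b by blast
qed

lemma K_L: "K \<subseteq> L"
proof -
  have "h \<in> L" if "h \<in> generate H (derived_set H (carrier H))" for h
    using that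
  proof (induction rule: generate.induct)
    case one then show ?case by (rule L_one)
  next
    case (incl h) then show ?case using cm_L by (auto simp: cm_def)
  next
    case (inv h) then show ?case using cm_L L_inv by (auto simp: cm_def)
  next
    case (eng h1 h2) then show ?case using L_mult by blast
  qed
  then show ?thesis using Kd by (auto simp: derived_def)
qed

lemma phi_inj: "inj_on phi (KK p r k)"
proof -
  have "L = K" using K_L L_K by blast
  then have "card (phi ` KK p r k) = card K" by (simp add: L_def)
  moreover have "card (phi ` KK p r k) \<le> card (KK p r k)" by (rule card_image_le[OF finite_KK])
  ultimately have "card (phi ` KK p r k) = card (KK p r k)" using bigK by linarith
  then show ?thesis by (rule eq_card_imp_inj_on[OF finite_KK])
qed

lemma phi_ne: "n \<in> KK p r k \<Longrightarrow> n \<noteq> z0 \<Longrightarrow> phi n \<noteq> \<one>\<^bsub>H\<^esub>"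
  using phi_inj phi_zero zero_KK by (metis inj_on_eq_iff)

end


context mainset begin

lemma lift0_pow: "k \<ge> 1 \<Longrightarrow> \<pi> (lift 0 [^]\<^bsub>H\<^esub> (s::nat)) = (\<lambda>i. if i = 0 then s mod p ^ r 0 else 0)"
  using rpos by (simp add: hh.hom_nat_pow ev_pow[OF pprime])

lemma f_as_pow: assumes "f \<in> carrier G" "\<forall>i. i \<noteq> 0 \<longrightarrow> f i = 0" "k \<ge> 1"
  shows "\<pi> (lift 0 [^]\<^bsub>H\<^esub> (f 0)) = f"
  using assms lift0_pow[of "f 0"] by (auto simp: cp_carrier intro!: ext)

lemma cm_P: assumes g: "g \<in> carrier G" and k1: "k \<ge> 1"
  shows "n \<le> k \<Longrightarrow> cm (lift 0) (P g n) =
    phi (\<lambda>x\<in>Is k. if fst x = 0 \<and> snd x < n then g (snd x) mod p ^ r (snd x) else 0)"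
proof (induction n)
  case 0
  have c: "cm (lift 0) (P g 0) = \<one>\<^bsub>H\<^esub>" using k1 by (simp add: cm_K_r inK)
  have e: "(\<lambda>x\<in>Is k. if fst x = 0 \<and> snd x < 0 then g (snd x) mod p ^ r (snd x) else 0) = z0"
    by (rule restrict_ext) simp
  show ?case unfolding e phi_zero by (rule c)
next
  case (Suc n)
  have n: "n < k" using Suc by simp
  have "cm (lift 0) (P g (Suc n)) = cm (lift 0) (P g n) \<otimes>\<^bsub>H\<^esub> cm (lift 0) (lift n) [^]\<^bsub>H\<^esub> g n"
    using n k1 P_c[of n g] by (simp add: cm_mult_r cm_pow_r)
  also have "\<dots> = phi (\<lambda>x\<in>Is k. if fst x = 0 \<and> snd x < Suc n then g (snd x) mod p ^ r (snd x) else 0)"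
  proof (cases "n = 0")
    case True
    have eq: "(\<lambda>x\<in>Is k. if fst x = 0 \<and> snd x < Suc n then g (snd x) mod p ^ r (snd x) else 0) =
          (\<lambda>x\<in>Is k. if fst x = 0 \<and> snd x < n then g (snd x) mod p ^ r (snd x) else 0)"
      using True by (intro restrict_ext) (auto simp: Is_def)
    have b: "cm (lift 0) (lift n) [^]\<^bsub>H\<^esub> g n = \<one>\<^bsub>H\<^esub>" using True k1 by (simp add: cm_self)
    have a: "cm (lift 0) (P g n) = phi (\<lambda>x\<in>Is k. if fst x = 0 \<and> snd x < n then g (snd x) mod p ^ r (snd x) else 0)"
      by (rule Suc.IH) (use n in simp)
    have c: "phi (\<lambda>x\<in>Is k. if fst x = 0 \<and> snd x < n then g (snd x) mod p ^ r (snd x) else 0) \<in> carrier H"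
      using phi_K by (simp add: inK)
    show ?thesis unfolding a b eq by (rule H.r_one[OF c])
  next
    case False
    have x0: "(0, n) \<in> Is k" using False n by (simp add: Is_def)
    have "cm (lift 0) (lift n) [^]\<^bsub>H\<^esub> g n = phi (\<lambda>x\<in>Is k. if x = (0, n) then g n mod p ^ r (snd (0::nat, n)) else 0)"
      using phi_single[OF x0, of "g n"] by (simp add: cc_def)
    moreover have "(\<lambda>x\<in>Is k. ((\<lambda>x\<in>Is k. if fst x = 0 \<and> snd x < n then g (snd x) mod p ^ r (snd x) else 0) x
         + (\<lambda>x\<in>Is k. if x = (0, n) then g n mod p ^ r (snd (0::nat, n)) else 0) x) mod p ^ r (snd x))
       = (\<lambda>x\<in>Is k. if fst x = 0 \<and> snd x < Suc n then g (snd x) mod p ^ r (snd x) else 0)"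
    proof (intro restrict_ext)
      fix x assume x: "x \<in> Is k"
      show "((\<lambda>x\<in>Is k. if fst x = 0 \<and> snd x < n then g (snd x) mod p ^ r (snd x) else 0) x
         + (\<lambda>x\<in>Is k. if x = (0, n) then g n mod p ^ r (snd (0::nat, n)) else 0) x) mod p ^ r (snd x)
         = (if fst x = 0 \<and> snd x < Suc n then g (snd x) mod p ^ r (snd x) else 0)"
        using x by (cases x) (auto simp: less_Suc_eq)
    qed
    ultimately show ?thesis using Suc n phi_mult by simp
  qed
  finally show ?case .
qed

abbreviation "D \<equiv> {f \<in> carrier G. (\<forall>i. i \<noteq> 0 \<longrightarrow> f i = 0) \<and> p ^ r 1 dvd f 0}"

lemma central_D: assumes k2: "k \<ge> 2" and f: "f \<in> D" and a: "a \<in> carrier H" "\<pi> a = f"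
  and b: "b \<in> carrier H" shows "cm a b = \<one>\<^bsub>H\<^esub>"
proof -
  obtain q where q: "f 0 = p ^ r 1 * q" using f by auto
  have l0: "lift 0 \<in> carrier H" using k2 by simp
  have "cm a b = cm (lift 0 [^]\<^bsub>H\<^esub> (f 0)) b"
    using cm_resp[of "lift 0 [^]\<^bsub>H\<^esub> (f 0)" a b b] a b f f_as_pow[of f] k2 by auto
  also have "\<dots> = (cm (lift 0) b [^]\<^bsub>H\<^esub> (p ^ r 1)) [^]\<^bsub>H\<^esub> q"
    using l0 b by (simp add: cm_pow_l q H.nat_pow_pow)
  also have "\<dots> = cm (lift 0) (b [^]\<^bsub>H\<^esub> (p ^ r 1)) [^]\<^bsub>H\<^esub> q"
    using l0 b by (simp add: cm_pow_r)
  also have "cm (lift 0) (b [^]\<^bsub>H\<^esub> (p ^ r 1)) = cm (lift 0) (lift 0 [^]\<^bsub>H\<^esub> ((p ^ r 1 * \<pi> b 0) mod p ^ r 0))"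
  proof (rule cm_resp)
    have pb: "\<pi> b \<in> carrier G" using b by simp
    show "\<pi> (lift 0 [^]\<^bsub>H\<^esub> (p ^ r 1 * \<pi> b 0 mod p ^ r 0)) = \<pi> (b [^]\<^bsub>H\<^esub> p ^ r 1)"
    proof -
      have "\<pi> (b [^]\<^bsub>H\<^esub> p ^ r 1) = (\<lambda>i. if i < k then (p ^ r 1 * \<pi> b i) mod p ^ r i else 0)"
        by (simp only: hh.hom_nat_pow[OF b] cp_pow[OF pb])
      also have "\<dots> = (\<lambda>i. if i = 0 then (p ^ r 1 * \<pi> b 0) mod p ^ r 0 mod p ^ r 0 else 0)"
      proof (intro ext)
        fix i show "(if i < k then (p ^ r 1 * \<pi> b i) mod p ^ r i else 0) =
            (if i = 0 then (p ^ r 1 * \<pi> b 0) mod p ^ r 0 mod p ^ r 0 else 0)"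
        proof (cases "i = 0")
          case False
          then have "i < k \<Longrightarrow> p ^ r i dvd p ^ r 1 * \<pi> b i" using dvd_pw[of 1 i] by simp
          then show ?thesis using False by auto
        qed (use k2 in auto)
      qed
      finally have e: "\<pi> (b [^]\<^bsub>H\<^esub> p ^ r 1) = (\<lambda>i. if i = 0 then (p ^ r 1 * \<pi> b 0) mod p ^ r 0 mod p ^ r 0 else 0)" .
      have e2: "\<pi> (lift 0 [^]\<^bsub>H\<^esub> (p ^ r 1 * \<pi> b 0 mod p ^ r 0)) = (\<lambda>i. if i = 0 then (p ^ r 1 * \<pi> b 0) mod p ^ r 0 mod p ^ r 0 else 0)"
        by (rule lift0_pow) (use k2 in simp)
      show ?thesis unfolding e e2 by (rule refl)
    qed
  qed (use l0 b k2 in auto)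
  also have "\<dots> = \<one>\<^bsub>H\<^esub>" using l0 by (simp add: cm_pow_r cm_self)
  finally show ?thesis by simp
qed

lemma dominant_D: assumes k2: "k \<ge> 2" shows "dominant_vertices H \<pi> G = D"
proof (intro equalityI subsetI)
  fix f assume f: "f \<in> D"
  have "deep_adj H \<pi> f h" if h: "h \<in> carrier G" "h \<noteq> f" for h
    unfolding deep_adj_def using h central_D[OF k2 f] cm_comm_iff by auto
  then show "f \<in> dominant_vertices H \<pi> G" using f by (auto simp: dominant_vertices_def)
next
  fix f assume fd: "f \<in> dominant_vertices H \<pi> G"
  then have fc: "f \<in> carrier G" and adj: "\<And>h. h \<in> carrier G \<Longrightarrow> h \<noteq> f \<Longrightarrow> deep_adj H \<pi> f h"
    by (auto simp: dominant_vertices_def)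
  have e0: "ev 0 \<in> carrier G" and e1: "ev 1 \<in> carrier G" using ev_carrier[OF pprime] rpos k2 by auto
  have l0: "lift 0 \<in> carrier H" and l1: "lift 1 \<in> carrier H" using k2 by auto
  show "f \<in> D"
  proof (rule ccontr)
    assume nD: "f \<notin> D"
    show False
    proof (cases "\<exists>j. j \<noteq> 0 \<and> f j \<noteq> 0")
      case True
      then obtain j where j: "j \<noteq> 0" "f j \<noteq> 0" by auto
      have jk: "j < k" using j fc by (meson cp_carrier not_less)
      have "ev 0 \<noteq> f" using j by (auto simp: ev_def)
      then have "deep_adj H \<pi> f (ev 0)" using adj e0 by auto
      then have "P f k \<otimes>\<^bsub>H\<^esub> lift 0 = lift 0 \<otimes>\<^bsub>H\<^esub> P f k"
        unfolding deep_adj_def using P_c[of k f] P_full[OF fc] l0 k2 by auto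
      then have "lift 0 \<otimes>\<^bsub>H\<^esub> P f k = P f k \<otimes>\<^bsub>H\<^esub> lift 0" by simp
      then have c1: "cm (lift 0) (P f k) = \<one>\<^bsub>H\<^esub>" using cm_comm_iff[OF l0 P_c[of k f]] k2 by simp
      define N where "N = (\<lambda>x\<in>Is k. if fst x = 0 \<and> snd x < k then f (snd x) mod p ^ r (snd x) else 0)"
      have "N \<in> KK p r k" unfolding N_def KK_def by auto
      moreover have "N \<noteq> z0"
      proof
        assume "N = z0"
        then have "N (0, j) = z0 (0, j)" by simp
        moreover have ij: "(0, j) \<in> Is k" using j jk by (simp add: Is_def)
        ultimately have "f j mod p ^ r j = 0" using jk by (simp add: N_def)
        moreover have "f j < p ^ r j" using fc jk by (simp add: cp_carrier)
        ultimately show False using j by simp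
      qed
      ultimately have "phi N \<noteq> \<one>\<^bsub>H\<^esub>" by (rule phi_ne)
      moreover have "cm (lift 0) (P f k) = phi N" unfolding N_def using cm_P[OF fc, of k] k2 by simp
      ultimately show False using c1 by simp
    next
      case False
      then have f0: "\<forall>i. i \<noteq> 0 \<longrightarrow> f i = 0" by blast
      then have ndv: "\<not> p ^ r 1 dvd f 0" using nD fc by auto
      have "ev 1 \<noteq> f" using f0 by (auto simp: ev_def fun_eq_iff)
      then have "deep_adj H \<pi> f (ev 1)" using adj e1 by auto
      moreover have a: "lift 0 [^]\<^bsub>H\<^esub> (f 0) \<in> carrier H" "\<pi> (lift 0 [^]\<^bsub>H\<^esub> (f 0)) = f"
        using l0 f_as_pow[OF fc f0] k2 by auto
      ultimately have "lift 0 [^]\<^bsub>H\<^esub> (f 0) \<otimes>\<^bsub>H\<^esub> lift 1 = lift 1 \<otimes>\<^bsub>H\<^esub> lift 0 [^]\<^bsub>H\<^esub> (f 0)"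
        unfolding deep_adj_def using l1 k2 by auto
      then have c1: "cm (lift 0 [^]\<^bsub>H\<^esub> (f 0)) (lift 1) = \<one>\<^bsub>H\<^esub>" using cm_comm_iff a l1 by auto
      have x0: "(0, 1) \<in> Is k" using k2 by (simp add: Is_def)
      define N where "N = (\<lambda>x\<in>Is k. if x = (0, 1) then f 0 mod p ^ r (snd (0::nat, 1::nat)) else 0)"
      have "N \<in> KK p r k" unfolding N_def KK_def by auto
      moreover have "N \<noteq> z0"
      proof
        assume "N = z0"
        then have "N (0, 1) = z0 (0, 1)" by simp
        then have "f 0 mod p ^ r 1 = 0" using x0 by (simp add: N_def)
        then show False using ndv by (simp add: mod_eq_0_iff_dvd)
      qed
      ultimately have "phi N \<noteq> \<one>\<^bsub>H\<^esub>" by (rule phi_ne)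
      moreover have "cm (lift 0 [^]\<^bsub>H\<^esub> (f 0)) (lift 1) = phi N"
        unfolding N_def using phi_single[OF x0, of "f 0"] l0 l1 by (simp add: cm_pow_l cc_def)
      ultimately show False using c1 by simp
    qed
  qed
qed

end

theorem theorem4p4:
  fixes p k :: nat and r :: "nat \<Rightarrow> nat" and x1 :: "nat \<Rightarrow> nat"
    and H :: "('c, 'd) monoid_scheme" and \<pi> :: "'c \<Rightarrow> (nat \<Rightarrow> nat)"
  assumes "Factorial_Ring.prime p"
    and "k \<ge> 2"
    and "\<forall>i<k. r i \<ge> 1"
    and "\<forall>i j. i \<le> j \<and> j < k \<longrightarrow> r j \<le> r i"
    and "\<not> (\<exists>g \<in> carrier (cyc_prod p r k). generate (cyc_prod p r k) {g} = carrier (cyc_prod p r k))"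
    and "x1 \<in> carrier (cyc_prod p r k)"
    and "generate (cyc_prod p r k) {x1} = {f \<in> carrier (cyc_prod p r k). \<forall>i. i \<noteq> 0 \<longrightarrow> f i = 0}"
    and "schur_cover H \<pi> (cyc_prod p r k)"
  shows "dominant_vertices H \<pi> (cyc_prod p r k)
           = generate (cyc_prod p r k) {x1 [^]\<^bsub>cyc_prod p r k\<^esub> (p ^ r 1)}"
proof -
  interpret cp: cpset p r k using assms(1,3,4) by (simp add: cpset_def)
  have st: "stem_extension H \<pi> (cyc_prod p r k)" and fk: "finite (kernel H (cyc_prod p r k) \<pi>)"
    and mx: "\<And>(H' :: nat monoid) (\<pi>' :: nat \<Rightarrow> (nat \<Rightarrow> nat)). stem_extension H' \<pi>' (cyc_prod p r k) \<Longrightarrow>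
        card (kernel H' (cyc_prod p r k) \<pi>') \<le> card (kernel H (cyc_prod p r k) \<pi>)"
    using assms(8) unfolding schur_cover_def by auto
  have grG: "group (cyc_prod p r k)" using st by (simp add: stem_extension_def)
  obtain B :: "nat monoid" and \<pi>' where B: "stem_extension B \<pi>' (cyc_prod p r k)"
    "card (kernel B (cyc_prod p r k) \<pi>') = card (KK p r k)"
    using cp.lower_bound[OF grG] by blast
  have big: "card (KK p r k) \<le> card (kernel H (cyc_prod p r k) \<pi>)" using mx[OF B(1)] B(2) by simp
  interpret m: mainset p r k H \<pi>
    using st fk big by (simp add: mainset_def mainset_axioms_def cp.cpset_axioms)
  show ?thesis
    using m.dominant_D[OF assms(2)] cp.gen_D[OF grG assms(6) assms(7) assms(2)] by simp
qed

end
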